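(* Let $k\ge 1$ be an integer and $\sigma$ a permutation of $\mathbb{P}^1(\mathbb{F}_q)$. Let $\mathcal{A}_{\sigma,k}$ be the set of all tuples $(\mu; a_1,\dots,a_k)$ with $a_1,\dots,a_k\in\mathbb{F}_q$ and $\mu\in\mathbb{F}_q(x)$ of degree one such that $$\sigma = \mu(x)\circ x^{q-2}\circ(x-a_k)\circ x^{q-2}\circ(x-a_{k-1})\circ\cdots\circ x^{q-2}\circ(x-a_1),$$ and let $\mathcal{C}_{\sigma,k}$ be the set of all tuples $(\nu; b_1,\dots,b_k)$ with $b_1,\dots,b_k\in\mathbb{F}_q$ and $\nu\in\mathbb{F}_q(x)$ of degree one such that $$\sigma=\nu(x)\circ(b_1,\infty)\circ(b_2,\infty)\circ\cdots\circ(b_k,\infty).$$ Then the map $\mathcal{F}:\mathcal{A}_{\sigma,k}\to\mathcal{C}_{\sigma,k}$, $(\mu;a_1,\dots,a_k)\mapsto(\mu\circ\nu_0;\,F(a_1,\dots,a_k))$ where $\nu_0:=x^{-1}\circ(x-a_k)\circ x^{-1}\circ(x-a_{k-1})\circ\cdots\circ x^{-1}\circ(x-a_1)$, and the map $\mathcal{G}:\mathcal{C}_{\sigma,k}\to\mathcal{A}_{\sigma,k}$, $(\nu;b_1,\dots,b_k)\mapsto(\nu\circ\mu_0;\,a_1,\dots,a_k)$ where $(a_1,\dots,a_k):=G(b_1,\dots,b_k)$ and $\mu_0:=(x+a_1)\circ x^{-1}\circ(x+a_2)\circ x^{-1}\circ\cdots\circ(x+a_k)\circ x^{-1}$, are well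 defined and are mutually inverse bijections. In particular $|\mathcal{A}_{\sigma,k}|=|\mathcal{C}_{\sigma,k}|$.
   Context: Let $q>2$ be a prime power, $\mathbb{F}_q$ the field with $q$ elements, and $\mathbb{P}^1(\mathbb{F}_q)=\mathbb{F}_q\cup\{\infty\}$. A degree-one rational function $\mu(x)=(\alpha x+\beta)/(\gamma x+\delta)\in\mathbb{F}_q(x)$ ($\alpha\delta-\beta\gamma\neq0$) acts as a permutation of $\mathbb{P}^1(\mathbb{F}_q)$ with the usual conventions ($\mu(\infty)=\alpha/\gamma$, or $\infty$ if $\gamma=0$; $\mu(-\delta/\gamma)=\infty$ if $\gamma\ne0$); e.g. $x^{-1}$ swaps $0$ and $\infty$. The monomial $x^{q-2}$ acts on $\mathbb{P}^1(\mathbb{F}_q)$ by fixing $0$ and $\infty$ and sending $c\in\mathbb{F}_q^*$ to $c^{q-2}=c^{-1}$. For $b\in\mathbb{F}_q$, $(b,\infty)$ is the transposition of $\mathbb{P}^1(\mathbb{F}_q)$ swapping $b$ and $\infty$. Composition is $(f\circ g)(x)=f(g(x))$ and all identities are equalities of permutations of $\mathbb{P}^1(\mathbb{F}_q)$. For $c\in\mathbb{F}_q$, $c^{q-2}$ is the field element (so $0^{q-2}=0$). The map $F:\mathbb{F}_q^k\to\mathbb{F}_q^k$ sends $(a_1,\dots,a_k)$ to $(b_1,\dots,b_k)$ where $b_i:=c_{i,i}$, and for each $1\le i\le k$ the elements $c_{i,j}$ ($0\le j\le i$) are defined by $c_{i,0}:=0$ and $c_{i,j}:=c_{i,j-1}^{q-2}+a_{i-j+1}$.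 For $2\le\ell\le k$ let $\Phi_\ell:\mathbb{F}_q^\ell\to\mathbb{F}_q^{\ell-1}$ send $(e_1,\dots,e_\ell)$ to $((e_2-e_1)^{q-2},(e_3-e_1)^{q-2},\dots,(e_\ell-e_1)^{q-2})$. The map $G:\mathbb{F}_q^k\to\mathbb{F}_q^k$ sends $(b_1,\dots,b_k)$ to $(a_1,\dots,a_k)$ where $a_i$ is the first entry of $\Phi_{k-i+2}\circ\Phi_{k-i+3}\circ\cdots\circ\Phi_k(b_1,\dots,b_k)\in\mathbb{F}_q^{k-i+1}$ (for $i=1$ this composite is the identity, so $a_1=b_1$). *)

theory Defs
  imports "HOL-Library.Cardinality"
begin

text \<open>The finite field F_q is a type 'a :: {field, finite}; q = CARD('a).
  The projective line P^1(F_q) is 'a option, with None playing the role of infinity.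
  A degree-one rational function is identified with the permutation of P^1(F_q) it
  induces (this identification is injective, since a Moebius map fixing 0, 1, infinity
  is the identity).\<close>

definition mob :: "'a::field \<Rightarrow> 'a \<Rightarrow> 'a \<Rightarrow> 'a \<Rightarrow> 'a option \<Rightarrow> 'a option" where
  "mob \<alpha> \<beta> \<gamma> \<delta> z = (case z of
      None \<Rightarrow> (if \<gamma> = 0 then None else Some (\<alpha> / \<gamma>))
    | Some x \<Rightarrow> (if \<gamma> * x + \<delta> = 0 then None else Some ((\<alpha> * x + \<beta>) / (\<gamma> * x + \<delta>))))"

definition deg1 :: "('a::field option \<Rightarrow> 'a option) \<Rightarrow> bool" where
  "deg1 \<mu> \<longleftrightarrow> (\<exists>\<alpha> \<beta> \<gamma> \<delta>. \<alpha> * \<delta> - \<beta> * \<gamma> \<noteq> 0 \<and> \<mu> = mob \<alpha> \<beta> \<gamma> \<delta>)"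

definition xqm2 :: "'a::{field,finite} option \<Rightarrow> 'a option" where
  "xqm2 z = map_option (\<lambda>c. c ^ (CARD('a) - 2)) z"

definition xminus :: "'a::field \<Rightarrow> 'a option \<Rightarrow> 'a option" where
  "xminus a = mob 1 (- a) 0 1"

definition xplus :: "'a::field \<Rightarrow> 'a option \<Rightarrow> 'a option" where
  "xplus a = mob 1 a 0 1"

definition xinv :: "'a::field option \<Rightarrow> 'a option" where
  "xinv = mob 0 1 1 0"

definition trinf :: "'a \<Rightarrow> 'a option \<Rightarrow> 'a option" where
  "trinf b z = (if z = Some b then None else if z = None then Some b else z)"

definition chainA :: "'a::{field,finite} list \<Rightarrow> 'a option \<Rightarrow> 'a option" where
  "chainA as = fold (\<lambda>a g. xqm2 \<circ> xminus a \<circ> g) as id"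

definition nu0 :: "'a::field list \<Rightarrow> 'a option \<Rightarrow> 'a option" where
  "nu0 as = fold (\<lambda>a g. xinv \<circ> xminus a \<circ> g) as id"

definition chainC :: "'a list \<Rightarrow> 'a option \<Rightarrow> 'a option" where
  "chainC bs = foldr (\<lambda>b g. trinf b \<circ> g) bs id"

definition mu0 :: "'a::field list \<Rightarrow> 'a option \<Rightarrow> 'a option" where
  "mu0 as = foldr (\<lambda>a g. xplus a \<circ> xinv \<circ> g) as id"

text \<open>c_{i,j} (1-based indices; as ! (m-1) = a_m):
  c_{i,0} = 0, c_{i,j} = c_{i,j-1}^(q-2) + a_{i-j+1}.\<close>
fun cF :: "'a::{field,finite} list \<Rightarrow> nat \<Rightarrow> nat \<Rightarrow> 'a" where
  "cF as i 0 = 0"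
| "cF as i (Suc j) = (cF as i j) ^ (CARD('a) - 2) + as ! (i - Suc j)"

definition Fmap :: "'a::{field,finite} list \<Rightarrow> 'a list" where
  "Fmap as = map (\<lambda>i. cF as i i) [1..<length as + 1]"

fun Phi :: "'a::{field,finite} list \<Rightarrow> 'a list" where
  "Phi [] = []"
| "Phi (e # es) = map (\<lambda>x. (x - e) ^ (CARD('a) - 2)) es"

definition Gmap :: "'a::{field,finite} list \<Rightarrow> 'a list" where
  "Gmap bs = map (\<lambda>i. hd ((Phi ^^ (i - 1)) bs)) [1..<length bs + 1]"

definition setA :: "('a::{field,finite} option \<Rightarrow> 'a option) \<Rightarrow> nat
    \<Rightarrow> (('a option \<Rightarrow> 'a option) \<times> 'a list) set" where
  "setA \<sigma> k = {(\<mu>, as). deg1 \<mu> \<and> length as = k \<and> \<sigma> = \<mu> \<circ> chainA as}"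

definition setC :: "('a::{field,finite} option \<Rightarrow> 'a option) \<Rightarrow> nat
    \<Rightarrow> (('a option \<Rightarrow> 'a option) \<times> 'a list) set" where
  "setC \<sigma> k = {(\<nu>, bs). deg1 \<nu> \<and> length bs = k \<and> \<sigma> = \<nu> \<circ> chainC bs}"

definition calF :: "('a::{field,finite} option \<Rightarrow> 'a option) \<times> 'a list
    \<Rightarrow> ('a option \<Rightarrow> 'a option) \<times> 'a list" where
  "calF p = (case p of (\<mu>, as) \<Rightarrow> (\<mu> \<circ> nu0 as, Fmap as))"

definition calG :: "('a::{field,finite} option \<Rightarrow> 'a option) \<times> 'a list
    \<Rightarrow> ('a option \<Rightarrow> 'a option) \<times> 'a list" where
  "calG p = (case p of (\<nu>, bs) \<Rightarrow> (\<nu> \<circ> mu0 (Gmap bs), Gmap bs))"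

end

theory Submission
  imports Defs
begin

lemma fermat_field:
  fixes c :: "'a::{field,finite}"
  assumes "c \<noteq> 0"
  shows "c ^ (CARD('a) - 1) = 1"
proof -
  let ?U = "UNIV - {0::'a}"
  have bij: "bij_betw (\<lambda>x. c * x) ?U ?U"
    unfolding bij_betw_def
  proof
    show "inj_on (\<lambda>x. c * x) ?U" using assms by (auto simp: inj_on_def)
    show "(\<lambda>x. c * x) ` ?U = ?U"
    proof
      show "(\<lambda>x. c * x) ` ?U \<subseteq> ?U" using assms by auto
      show "?U \<subseteq> (\<lambda>x. c * x) ` ?U"
      proof
        fix y assume "y \<in> ?U"
        then have "y = c * (y / c)" "y / c \<in> ?U" using assms by auto
        then show "y \<in> (\<lambda>x. c * x) ` ?U" by blast
      qed
    qed
  qed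
  have "prod id ?U = prod (\<lambda>x. id (c * x)) ?U"
    using prod.reindex_bij_betw[OF bij, of id] by simp
  also have "\<dots> = c ^ card ?U * prod id ?U"
    by (simp add: prod.distrib)
  finally have eq: "prod id ?U = c ^ card ?U * prod id ?U" .
  have nz: "prod id ?U \<noteq> 0" by simp
  have "c ^ card ?U = 1" using eq nz
    by (metis mult_cancel_right1)
  moreover have "card ?U = CARD('a) - 1" by (simp add: card_Diff_singleton)
  ultimately show ?thesis by simp
qed

lemma pow_inv:
  fixes c :: "'a::{field,finite}"
  assumes "CARD('a) > 2"
  shows "c ^ (CARD('a) - 2) = inverse c"
proof (cases "c = 0")
  case True
  then show ?thesis using assms by simp
next
  case False
  have "c ^ (CARD('a) - 2) * c = c ^ (CARD('a) - 1)"
    using assms by (metis power_Suc2 Suc_diff_Suc numeral_2_eq_2 less_trans_Suc zero_less_Suc diff_Suc_1 One_nat_def)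
  then have "c ^ (CARD('a) - 2) * c = 1" using fermat_field[OF False] by simp
  then show ?thesis using False by (simp add: field_simps)
qed

lemma pow_invol:
  fixes c :: "'a::{field,finite}"
  assumes "CARD('a) > 2"
  shows "(c ^ (CARD('a) - 2)) ^ (CARD('a) - 2) = c"
  using pow_inv[OF assms] by simp

lemma mob_comp:
  fixes a b c d a' b' c' d' :: "'a::field"
  assumes "a*d - b*c \<noteq> 0" "a'*d' - b'*c' \<noteq> 0"
  shows "mob a b c d \<circ> mob a' b' c' d' = mob (a*a'+b*c') (a*b'+b*d') (c*a'+d*c') (c*b'+d*d')"
proof
  fix z
  show "(mob a b c d \<circ> mob a' b' c' d') z = mob (a*a'+b*c') (a*b'+b*d') (c*a'+d*c') (c*b'+d*d') z"
  proof (cases z)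
    case None
    show ?thesis
    proof (cases "c' = 0")
      case True
      then have "a' \<noteq> 0" using assms(2) by auto
      then show ?thesis using None True by (simp add: mob_def)
    next
      case False
      have e: "c*a'+d*c' = c' * (c * (a'/c') + d)" using False by (simp add: field_simps)
      have e2: "(a*a'+b*c') = c' * (a * (a'/c') + b)" using False by (simp add: field_simps)
      show ?thesis using None False by (simp add: mob_def e e2)
    qed
  next
    case (Some x)
    show ?thesis
    proof (cases "c'*x+d' = 0")
      case True
      have n: "a'*x+b' \<noteq> 0"
      proof
        assume h: "a'*x+b' = 0"
        have "a'*d' - b'*c' = a'*(c'*x+d') - c'*(a'*x+b')" by (simp add: algebra_simps)
        then show False using h True assms(2) by simp
      qed
      have e: "(c*a'+d*c')*x + (c*b'+d*d') = c*(a'*x+b') + d*(c'*x+d')" by (simp add: algebra_simps)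
      have e2: "(a*a'+b*c')*x + (a*b'+b*d') = a*(a'*x+b') + b*(c'*x+d')" by (simp add: algebra_simps)
      show ?thesis using Some True n by (simp add: mob_def e e2)
    next
      case False
      define y where "y = (a'*x+b')/(c'*x+d')"
      have e: "(c*a'+d*c')*x + (c*b'+d*d') = (c'*x+d')*(c*y+d)" using False
        by (simp add: y_def field_simps)
      have e2: "(a*a'+b*c')*x + (a*b'+b*d') = (c'*x+d')*(a*y+b)" using False
        by (simp add: y_def field_simps)
      show ?thesis using Some False by (simp add: mob_def e e2 y_def[symmetric])
    qed
  qed
qed

lemma deg1_comp: "deg1 f \<Longrightarrow> deg1 g \<Longrightarrow> deg1 (f \<circ> g)"
proof -
  assume "deg1 f" "deg1 g"
  then obtain a b c d a' b' c' d' where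
    h: "a*d - b*c \<noteq> 0" "f = mob a b c d" "a'*d' - b'*c' \<noteq> 0" "g = mob a' b' c' d'"
    unfolding deg1_def by blast
  have "(a*a'+b*c')*(c*b'+d*d') - (a*b'+b*d')*(c*a'+d*c') = (a*d - b*c)*(a'*d' - b'*c')"
    by (simp add: algebra_simps)
  then have "(a*a'+b*c')*(c*b'+d*d') - (a*b'+b*d')*(c*a'+d*c') \<noteq> 0" using h by simp
  then show ?thesis unfolding deg1_def using h mob_comp[OF h(1) h(3)] by blast
qed

lemma mob_id: "mob 1 0 0 1 = id"
  by (rule ext) (simp add: mob_def split: option.split)

lemma deg1_id: "deg1 id"
  unfolding deg1_def using mob_id by (metis mult_1 diff_zero mult_zero_left one_neq_zero)

lemma deg1_xinv: "deg1 xinv" unfolding deg1_def xinv_def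
  by (rule exI[of _ 0], rule exI[of _ 1], rule exI[of _ 1], rule exI[of _ 0]) simp
lemma deg1_xminus: "deg1 (xminus a)" unfolding deg1_def xminus_def
  by (rule exI[of _ 1], rule exI[of _ "-a"], rule exI[of _ 0], rule exI[of _ 1]) simp
lemma deg1_xplus: "deg1 (xplus a)" unfolding deg1_def xplus_def
  by (rule exI[of _ 1], rule exI[of _ "a"], rule exI[of _ 0], rule exI[of _ 1]) simp

lemma xinv_xinv: "xinv (xinv z) = z"
  by (cases z) (auto simp: xinv_def mob_def)
lemma xminus_xplus: "xminus a (xplus a z) = z"
  by (cases z) (auto simp: xminus_def xplus_def mob_def)
lemma xplus_xminus: "xplus a (xminus a z) = z"
  by (cases z) (auto simp: xminus_def xplus_def mob_def)

lemma fold_comp_gen: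
  fixes h :: "'x \<Rightarrow> 'b \<Rightarrow> 'b" and g :: "'b \<Rightarrow> 'b"
  shows "fold (\<lambda>a g. h a \<circ> g) xs g = fold (\<lambda>a g. h a \<circ> g) xs id \<circ> g"
proof (induction xs arbitrary: g)
  case Nil then show ?case by simp
next
  case (Cons x xs)
  have "fold (\<lambda>a g. h a \<circ> g) (x # xs) g = fold (\<lambda>a g. h a \<circ> g) xs (h x \<circ> g)" by (simp only: fold_Cons comp_apply)
  also have "\<dots> = fold (\<lambda>a g. h a \<circ> g) xs id \<circ> (h x \<circ> g)" by (rule Cons.IH)
  also have "\<dots> = (fold (\<lambda>a g. h a \<circ> g) xs id \<circ> (h x \<circ> id)) \<circ> g" by (simp only: comp_id comp_assoc)
  also have "fold (\<lambda>a g. h a \<circ> g) xs id \<circ> (h x \<circ> id) = fold (\<lambda>a g. h a \<circ> g) xs (h x \<circ> id)"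
    using Cons.IH[of "h x \<circ> id"] by (rule sym)
  also have "\<dots> = fold (\<lambda>a g. h a \<circ> g) (x#xs) id" by (simp only: fold_Cons comp_apply)
  finally show ?case .
qed

lemma foldr_comp_gen: "foldr (\<lambda>a g. h a \<circ> g) xs g = foldr (\<lambda>a g. h a \<circ> g) xs id \<circ> g"
  by (induction xs) (simp_all add: comp_assoc)

lemma nu0_Cons: "nu0 (a # as) = nu0 as \<circ> (xinv \<circ> xminus a)"
proof -
  have "nu0 (a # as) = fold (\<lambda>a g. (xinv \<circ> xminus a) \<circ> g) as ((xinv \<circ> xminus a) \<circ> id)"
    unfolding nu0_def by (simp only: fold_Cons comp_apply)
  also have "\<dots> = nu0 as \<circ> ((xinv \<circ> xminus a) \<circ> id)"
    unfolding nu0_def by (rule fold_comp_gen)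
  finally show ?thesis by simp
qed

lemma mu0_Cons: "mu0 (a # as) = xplus a \<circ> xinv \<circ> mu0 as"
  unfolding mu0_def by simp

lemma nu0_snoc: "nu0 (as @ [a]) = xinv \<circ> xminus a \<circ> nu0 as"
  unfolding nu0_def by simp

lemma chainA_snoc: "chainA (as @ [a]) = xqm2 \<circ> xminus a \<circ> chainA as"
  unfolding chainA_def by simp

lemma chainC_snoc: "chainC (bs @ [b]) = chainC bs \<circ> trinf b"
  unfolding chainC_def using foldr_comp_gen[of trinf bs "trinf b"] by simp

lemma nu0_mu0: "nu0 as \<circ> mu0 as = id"
proof (induction as)
  case Nil then show ?case by (simp add: nu0_def mu0_def)
next
  case (Cons a as)
  have "xinv \<circ> xminus a \<circ> (xplus a \<circ> xinv) = id"
    by (rule ext) (simp add: xminus_xplus xinv_xinv)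
  have "nu0 (a # as) \<circ> mu0 (a # as) = nu0 as \<circ> (xinv \<circ> xminus a \<circ> (xplus a \<circ> xinv)) \<circ> mu0 as"
    by (simp only: nu0_Cons mu0_Cons comp_assoc)
  then show ?case using Cons.IH \<open>xinv \<circ> xminus a \<circ> (xplus a \<circ> xinv) = id\<close> by simp
qed

lemma mu0_nu0: "mu0 as \<circ> nu0 as = id"
proof (induction as)
  case Nil then show ?case by (simp add: nu0_def mu0_def)
next
  case (Cons a as)
  have "mu0 (a # as) \<circ> nu0 (a # as) = xplus a \<circ> xinv \<circ> (mu0 as \<circ> nu0 as) \<circ> xinv \<circ> xminus a"
    by (simp add: nu0_Cons mu0_Cons comp_assoc)
  also have "\<dots> = id" using Cons.IH
    by (simp add: fun_eq_iff xinv_xinv xplus_xminus)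
  finally show ?case .
qed

lemma deg1_nu0: "deg1 (nu0 as)"
proof (induction as rule: rev_induct)
  case Nil then show ?case by (simp add: nu0_def deg1_id[unfolded id_def])
next
  case (snoc a as) then show ?case
    unfolding nu0_snoc by (intro deg1_comp deg1_xinv deg1_xminus)
qed

lemma deg1_mu0: "deg1 (mu0 as)"
proof (induction as)
  case Nil then show ?case by (simp add: mu0_def deg1_id[unfolded id_def])
next
  case (Cons a as) then show ?case
    unfolding mu0_Cons by (intro deg1_comp deg1_xinv deg1_xplus)
qed

definition cv :: "'a::{field,finite} list \<Rightarrow> 'a" where
  "cv xs = foldr (\<lambda>x v. x + v ^ (CARD('a) - 2)) xs 0"

lemma cv_Nil: "cv [] = 0" by (simp add: cv_def)
lemma cv_Cons: "cv (x # xs) = x + (cv xs) ^ (CARD('a) - 2)" for x :: "'a::{field,finite}"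
  by (simp add: cv_def)

context
  assumes q: "CARD('a::{field,finite}) > 2"
begin

lemma cv_single: "cv [a] = (a::'a)"
  using q by (simp add: cv_Cons cv_Nil)

lemma xqm2_xminus: "xqm2 \<circ> xminus a = xinv \<circ> xminus a \<circ> trinf (a::'a)"
proof
  fix z :: "'a option"
  show "(xqm2 \<circ> xminus a) z = (xinv \<circ> xminus a \<circ> trinf a) z"
  proof (cases z)
    case None then show ?thesis by (simp add: xqm2_def xminus_def xinv_def mob_def trinf_def)
  next
    case (Some x)
    show ?thesis
    proof (cases "x = a")
      case True then show ?thesis using Some q
        by (simp add: xqm2_def xminus_def xinv_def mob_def trinf_def)
    next
      case False then show ?thesis using Some q
        by (simp add: xqm2_def xminus_def xinv_def mob_def trinf_def pow_inv[OF q] divide_inverse)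
    qed
  qed
qed

lemma xqm2_xqm2: "xqm2 (xqm2 z) = (z::'a option)"
  by (cases z) (simp_all add: xqm2_def pow_invol[OF q])

lemma chainA_None: "chainA xs None = (None :: 'a option)"
  by (induction xs rule: rev_induct)
     (simp_all add: chainA_def xqm2_def xminus_def mob_def)

lemma chainA_inj: "inj (chainA (xs :: 'a list))"
proof (induction xs rule: rev_induct)
  case Nil then show ?case by (simp add: chainA_def)
next
  case (snoc a xs)
  have i1: "inj (xqm2 :: 'a option \<Rightarrow> _)" by (metis injI xqm2_xqm2)
  have i2: "inj (xminus a)" by (metis injI xplus_xminus)
  show ?case unfolding chainA_snoc using i1 i2 snoc.IH by (intro inj_compose)
qed

lemma chainA_cv: "chainA xs (Some (cv (xs @ ys))) = Some (cv (ys :: 'a list))"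
proof (induction xs arbitrary: ys rule: rev_induct)
  case Nil then show ?case by (simp add: chainA_def)
next
  case (snoc x xs)
  have "chainA (xs @ [x]) (Some (cv ((xs @ [x]) @ ys))) = xqm2 (xminus x (chainA xs (Some (cv (xs @ (x # ys))))))"
    by (simp add: chainA_snoc)
  also have "\<dots> = xqm2 (xminus x (Some (cv (x # ys))))" by (simp only: snoc.IH)
  also have "\<dots> = Some (cv ys)" by (simp add: cv_Cons xqm2_def xminus_def mob_def pow_invol[OF q])
  finally show ?case .
qed

end

lemma cF_cv: "j \<le> i \<Longrightarrow> i \<le> length as \<Longrightarrow> cF as i j = cv (take j (drop (i - j) as))"
proof (induction j)
  case 0 then show ?case by (simp add: cv_Nil)
next
  case (Suc j)
  have lt: "i - Suc j < length as" using Suc.prems by simp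
  have d: "drop (i - Suc j) as = as ! (i - Suc j) # drop (i - j) as"
    using Cons_nth_drop_Suc[OF lt] Suc.prems by (metis Suc_diff_Suc Suc_le_lessD)
  show ?case using Suc.IH Suc.prems by (simp add: d cv_Cons add.commute)
qed

lemma Fmap_cv: "Fmap as = map (\<lambda>i. cv (take (Suc i) as)) [0..<length as]"
proof (rule nth_equalityI)
  show "length (Fmap as) = length (map (\<lambda>i. cv (take (Suc i) as)) [0..<length as])"
    by (simp del: upt_Suc add: Fmap_def)
  fix i assume "i < length (Fmap as)"
  then have i: "i < length as" by (simp del: upt_Suc add: Fmap_def)
  have "Fmap as ! i = cF as (Suc i) (Suc i)" using i by (simp del: upt_Suc cF.simps add: Fmap_def)
  also have "\<dots> = cv (take (Suc i) as)" using i cF_cv[of "Suc i" "Suc i" as] by simp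
  finally show "Fmap as ! i = map (\<lambda>i. cv (take (Suc i) as)) [0..<length as] ! i" using i by simp
qed

lemma length_Fmap: "length (Fmap as) = length as"
  by (simp del: upt_Suc add: Fmap_def)

lemma Fmap_snoc: "Fmap (xs @ [a]) = Fmap xs @ [cv (xs @ [a])]"
  by (rule nth_equalityI) (auto simp del: upt_Suc simp: Fmap_cv nth_append)

lemma Fmap_Cons: "Fmap (a # l) = cv [a] # map (\<lambda>i. cv (a # take (Suc i) l)) [0..<length l]"
  by (rule nth_equalityI) (auto simp del: upt_Suc simp: Fmap_cv nth_Cons')

context
  assumes q: "CARD('a::{field,finite}) > 2"
begin

lemma main_factor: "chainA (as::'a list) = nu0 as \<circ> chainC (Fmap as)"
proof (induction as rule: rev_induct)
  case Nil then show ?case by (simp add: chainA_def nu0_def chainC_def Fmap_def)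
next
  case (snoc a xs)
  define K where "K = chainA xs"
  define b where "b = cv (xs @ [a])"
  have Kb: "K (Some b) = Some a" unfolding K_def b_def using chainA_cv[OF q, of xs "[a]"] cv_single[OF q] by simp
  have KN: "K None = None" unfolding K_def by (rule chainA_None[OF q])
  have Ki: "inj K" unfolding K_def by (rule chainA_inj[OF q])
  have sw: "trinf a \<circ> K = K \<circ> trinf b"
  proof
    fix z
    show "(trinf a \<circ> K) z = (K \<circ> trinf b) z"
    proof (cases "z = Some b")
      case True then show ?thesis using Kb KN by (simp add: trinf_def)
    next
      case False
      show ?thesis
      proof (cases "z = None")
        case True then show ?thesis using Kb KN by (simp add: trinf_def)
      next
        case False
        have "K z \<noteq> Some a" using \<open>z \<noteq> Some b\<close> Kb Ki by (metis injD)
        moreover have "K z \<noteq> None" using False KN Ki by (metis injD)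
        ultimately have "trinf a (K z) = K z" by (simp add: trinf_def)
        moreover have "trinf b z = z" using False \<open>z \<noteq> Some b\<close> by (simp add: trinf_def)
        ultimately show ?thesis by simp
      qed
    qed
  qed
  have "chainA (xs @ [a]) = (xqm2 \<circ> xminus a) \<circ> K" by (simp add: chainA_snoc K_def)
  also have "\<dots> = xinv \<circ> xminus a \<circ> (trinf a \<circ> K)" by (simp add: xqm2_xminus[OF q] comp_assoc)
  also have "\<dots> = xinv \<circ> xminus a \<circ> K \<circ> trinf b" by (simp add: sw comp_assoc)
  also have "\<dots> = xinv \<circ> xminus a \<circ> nu0 xs \<circ> chainC (Fmap xs) \<circ> trinf b"
    unfolding K_def snoc.IH by (simp only: comp_assoc)
  also have "\<dots> = nu0 (xs @ [a]) \<circ> chainC (Fmap (xs @ [a]))"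
    by (simp add: nu0_snoc chainC_snoc Fmap_snoc b_def comp_assoc)
  finally show ?case .
qed

lemma Phi_Fmap: "Phi (Fmap (xs::'a list)) = Fmap (tl xs)"
proof (cases xs)
  case Nil then show ?thesis by (simp add: Fmap_def)
next
  case (Cons a l)
  show ?thesis unfolding Cons Fmap_Cons Phi.simps list.sel
    by (rule nth_equalityI) (simp_all del: upt_Suc add: Fmap_cv cv_Cons cv_Nil pow_inv[OF q])
qed

lemma Phi_pow_Fmap: "(Phi ^^ m) (Fmap (xs::'a list)) = Fmap (drop m xs)"
  by (induction m) (simp_all add: Phi_Fmap drop_Suc tl_drop)

lemma hd_Fmap: "xs \<noteq> [] \<Longrightarrow> hd (Fmap (xs::'a list)) = hd xs"
  by (cases xs) (simp_all add: Fmap_Cons cv_single[OF q])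

lemma Gmap_Fmap: "Gmap (Fmap (as::'a list)) = as"
  by (rule nth_equalityI)
     (simp_all del: upt_Suc add: Gmap_def length_Fmap Phi_pow_Fmap hd_Fmap hd_drop_conv_nth)

lemma Fmap_Gmap: "Fmap (Gmap (bs::'a list)) = bs"
proof -
  let ?S = "{xs :: 'a list. length xs = length bs}"
  have "finite {xs::'a list. set xs \<subseteq> UNIV \<and> length xs = length bs}"
    by (rule finite_lists_length_eq) simp
  then have fin: "finite ?S" by simp
  have sub: "Fmap ` ?S \<subseteq> ?S" by (auto simp: length_Fmap)
  have inj: "inj_on Fmap ?S" by (rule inj_on_inverseI[where g=Gmap]) (rule Gmap_Fmap)
  have "Fmap ` ?S = ?S" by (rule endo_inj_surj[OF fin sub inj])
  then obtain as where "length as = length bs" "bs = Fmap as" by (metis (mono_tags, lifting) imageE mem_Collect_eq)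
  then show ?thesis by (simp add: Gmap_Fmap)
qed

end

theorem theorem1:
  fixes \<sigma> :: "'a::{field,finite} option \<Rightarrow> 'a option" and k :: nat
  assumes "CARD('a) > 2" and "k \<ge> 1" and "bij \<sigma>"
  shows "(\<forall>p \<in> setA \<sigma> k. calF p \<in> setC \<sigma> k)
    \<and> (\<forall>p \<in> setC \<sigma> k. calG p \<in> setA \<sigma> k)
    \<and> (\<forall>p \<in> setA \<sigma> k. calG (calF p) = p)
    \<and> (\<forall>p \<in> setC \<sigma> k. calF (calG p) = p)
    \<and> bij_betw calF (setA \<sigma> k) (setC \<sigma> k)
    \<and> bij_betw calG (setC \<sigma> k) (setA \<sigma> k)
    \<and> card (setA \<sigma> k) = card (setC \<sigma> k)"
proof -
  note q = assms(1)
  have F: "\<forall>p \<in> setA \<sigma> k. calF p \<in> setC \<sigma> k"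
  proof
    fix p assume "p \<in> setA \<sigma> k"
    then obtain \<mu> as where p: "p = (\<mu>, as)" "deg1 \<mu>" "length as = k" "\<sigma> = \<mu> \<circ> chainA as"
      unfolding setA_def by blast
    have "\<sigma> = (\<mu> \<circ> nu0 as) \<circ> chainC (Fmap as)"
      using p(4) main_factor[OF q, of as] by (simp add: comp_assoc)
    then show "calF p \<in> setC \<sigma> k" using p
      by (simp add: calF_def setC_def deg1_comp deg1_nu0 length_Fmap)
  qed
  have G: "\<forall>p \<in> setC \<sigma> k. calG p \<in> setA \<sigma> k"
  proof
    fix p assume "p \<in> setC \<sigma> k"
    then obtain \<nu> bs where p: "p = (\<nu>, bs)" "deg1 \<nu>" "length bs = k" "\<sigma> = \<nu> \<circ> chainC bs"
      unfolding setC_def by blast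
    define as where "as = Gmap bs"
    have "chainC bs = chainC (Fmap as)" by (simp add: as_def Fmap_Gmap[OF q])
    also have "\<dots> = (mu0 as \<circ> nu0 as) \<circ> chainC (Fmap as)" by (simp add: mu0_nu0)
    also have "\<dots> = mu0 as \<circ> chainA as" by (simp add: main_factor[OF q] comp_assoc)
    finally have "\<sigma> = (\<nu> \<circ> mu0 as) \<circ> chainA as" using p(4) by (simp add: comp_assoc)
    moreover have "length as = k" using p(3) length_Fmap[of as] Fmap_Gmap[OF q, of bs]
      by (simp add: as_def)
    ultimately show "calG p \<in> setA \<sigma> k" using p
      by (simp add: calG_def setA_def deg1_comp deg1_mu0 as_def)
  qed
  have GF: "\<forall>p \<in> setA \<sigma> k. calG (calF p) = p"
  proof
    fix p assume "p \<in> setA \<sigma> k"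
    then obtain \<mu> as where p: "p = (\<mu>, as)" unfolding setA_def by blast
    have "\<mu> \<circ> nu0 as \<circ> mu0 as = \<mu>" by (simp add: comp_assoc nu0_mu0)
    then show "calG (calF p) = p" using p by (simp add: calF_def calG_def Gmap_Fmap[OF q])
  qed
  have FG: "\<forall>p \<in> setC \<sigma> k. calF (calG p) = p"
  proof
    fix p assume "p \<in> setC \<sigma> k"
    then obtain \<nu> bs where p: "p = (\<nu>, bs)" unfolding setC_def by blast
    have "\<nu> \<circ> mu0 (Gmap bs) \<circ> nu0 (Gmap bs) = \<nu>" by (simp add: comp_assoc mu0_nu0)
    then show "calF (calG p) = p" using p by (simp add: calF_def calG_def Fmap_Gmap[OF q])
  qed
  have b1: "bij_betw calF (setA \<sigma> k) (setC \<sigma> k)"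
    by (rule bij_betw_byWitness[where f'=calG]) (use F G GF FG in auto)
  have b2: "bij_betw calG (setC \<sigma> k) (setA \<sigma> k)"
    by (rule bij_betw_byWitness[where f'=calF]) (use F G GF FG in auto)
  have "card (setA \<sigma> k) = card (setC \<sigma> k)" by (rule bij_betw_same_card[OF b1])
  then show ?thesis using F G GF FG b1 b2 by blast
qed

end
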